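(* Let $G$ be a two-step nilpotent group and let $w_1(x,y)$, $w_2(x,y)$ be group words in two letters such that the map $S\colon G^2\to G^2$, $S(x,y)=(w_1(x,y),w_2(x,y))$, is a solution of the Yang--Baxter equation on $G$. Then the map $S^{Ab}\colon(G^{Ab})^2\to(G^{Ab})^2$, $S^{Ab}(x,y)=(w_1(x,y),w_2(x,y))$ (the same words evaluated in the abelianization $G^{Ab}=G/[G,G]$), is a (verbal) solution of the Yang--Baxter equation on $G^{Ab}$.
   Context: For a nonempty set $X$, a map $S\colon X^2\to X^2$ is a solution of the Yang--Baxter equation on $X$ if $S_1S_2S_1=S_2S_1S_2$ as maps $X^3\to X^3$, where $S_1=S\times\mathrm{Id}$ and $S_2=\mathrm{Id}\times S$. A two-step nilpotent group is a group of nilpotency class at most $2$. A solution is verbal if both of its components are given by evaluating group words. *)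

theory Defs
  imports "HOL-Algebra.Algebra"
begin

datatype gword = LX | LY | WOne | WMul gword gword | WInv gword

primrec eval_word :: "('a, 'b) monoid_scheme \<Rightarrow> 'a \<Rightarrow> 'a \<Rightarrow> gword \<Rightarrow> 'a" where
  "eval_word G x y LX = x"
| "eval_word G x y LY = y"
| "eval_word G x y WOne = \<one>\<^bsub>G\<^esub>"
| "eval_word G x y (WMul u v) = eval_word G x y u \<otimes>\<^bsub>G\<^esub> eval_word G x y v"
| "eval_word G x y (WInv u) = inv\<^bsub>G\<^esub> (eval_word G x y u)"

definition verbal_map :: "('a, 'b) monoid_scheme \<Rightarrow> gword \<Rightarrow> gword \<Rightarrow> 'a \<times> 'a \<Rightarrow> 'a \<times> 'a" where
  "verbal_map G w1 w2 = (\<lambda>(x, y). (eval_word G x y w1, eval_word G x y w2))"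

definition ybe_S1 :: "('a \<times> 'a \<Rightarrow> 'a \<times> 'a) \<Rightarrow> 'a \<times> 'a \<times> 'a \<Rightarrow> 'a \<times> 'a \<times> 'a" where
  "ybe_S1 S = (\<lambda>(x, y, z). (fst (S (x, y)), snd (S (x, y)), z))"

definition ybe_S2 :: "('a \<times> 'a \<Rightarrow> 'a \<times> 'a) \<Rightarrow> 'a \<times> 'a \<times> 'a \<Rightarrow> 'a \<times> 'a \<times> 'a" where
  "ybe_S2 S = (\<lambda>(x, y, z). (x, fst (S (y, z)), snd (S (y, z))))"

definition is_ybe_solution :: "'a set \<Rightarrow> ('a \<times> 'a \<Rightarrow> 'a \<times> 'a) \<Rightarrow> bool" where
  "is_ybe_solution A S \<longleftrightarrow>
     A \<noteq> {} \<and>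
     (\<forall>x\<in>A. \<forall>y\<in>A. fst (S (x, y)) \<in> A \<and> snd (S (x, y)) \<in> A) \<and>
     (\<forall>x\<in>A. \<forall>y\<in>A. \<forall>z\<in>A.
        ybe_S1 S (ybe_S2 S (ybe_S1 S (x, y, z))) = ybe_S2 S (ybe_S1 S (ybe_S2 S (x, y, z))))"

text \<open>Nilpotency class at most 2: the derived subgroup [G,G] is central.\<close>
definition two_step_nilpotent :: "('a, 'b) monoid_scheme \<Rightarrow> bool" where
  "two_step_nilpotent G \<longleftrightarrow> group G \<and>
     (\<forall>c\<in>derived G (carrier G). \<forall>g\<in>carrier G. c \<otimes>\<^bsub>G\<^esub> g = g \<otimes>\<^bsub>G\<^esub> c)"

definition abelianization :: "('a, 'b) monoid_scheme \<Rightarrow> 'a set monoid" where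
  "abelianization G = G Mod (derived G (carrier G))"

end

theory Submission
  imports Defs
begin

lemma eval_word_hom:
  assumes "group G" "group K" "h \<in> hom G K" "x \<in> carrier G" "y \<in> carrier G"
  shows "eval_word G x y w \<in> carrier G \<and> h (eval_word G x y w) = eval_word K (h x) (h y) w"
proof (induction w)
  case WOne
  then show ?case using assms group_hom.hom_one[of G K h] by (simp add: group_hom_def group_hom_axioms_def group.is_monoid monoid.one_closed)
next
  case (WMul u v)
  then show ?case using assms by (simp add: group.is_monoid monoid.m_closed hom_mult)
next
  case (WInv u)
  then show ?case using assms group_hom.hom_inv[of G K h]
    by (simp add: group_hom_def group_hom_axioms_def group.inv_closed)
qed (use assms in auto)

lemma eval_word_closed:
  assumes "group K" "x \<in> carrier K" "y \<in> carrier K"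
  shows "eval_word K x y w \<in> carrier K"
  by (induction w) (use assms in \<open>auto simp: group.is_monoid monoid.m_closed monoid.one_closed group.inv_closed\<close>)

theorem proposition5p9:
  fixes G :: "('a, 'b) monoid_scheme" and w1 w2 :: gword
  assumes "two_step_nilpotent G"
    and "is_ybe_solution (carrier G) (verbal_map G w1 w2)"
  shows "is_ybe_solution (carrier (abelianization G)) (verbal_map (abelianization G) w1 w2)"
proof -
  have gG: "group G" using assms(1) two_step_nilpotent_def by blast
  define N where "N = derived G (carrier G)"
  have nN: "N \<lhd> G" unfolding N_def using group.derived_self_is_normal[OF gG] .
  define K where "K = abelianization G"
  have KN: "K = G Mod N" unfolding K_def abelianization_def N_def by simp
  have gK: "group K" unfolding KN using normal.factorgroup_is_group[OF nN] .
  define h where "h = (\<lambda>a. r_coset G N a)"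
  have hh: "h \<in> hom G K" unfolding KN h_def using normal.r_coset_hom_Mod[OF nN] .
  have surj: "\<exists>a\<in>carrier G. U = h a" if "U \<in> carrier K" for U
    using that unfolding KN h_def FactGroup_def RCOSETS_def by simp
  note E = eval_word_hom[OF gG gK hh]
  have ybeG: "\<forall>x\<in>carrier G. \<forall>y\<in>carrier G. \<forall>z\<in>carrier G.
        ybe_S1 (verbal_map G w1 w2) (ybe_S2 (verbal_map G w1 w2) (ybe_S1 (verbal_map G w1 w2) (x, y, z)))
      = ybe_S2 (verbal_map G w1 w2) (ybe_S1 (verbal_map G w1 w2) (ybe_S2 (verbal_map G w1 w2) (x, y, z)))"
    using assms(2) unfolding is_ybe_solution_def by (elim conjE)
  have "carrier K \<noteq> {}" using gK group.is_monoid monoid.one_closed by blast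
  moreover have "\<forall>x\<in>carrier K. \<forall>y\<in>carrier K. fst (verbal_map K w1 w2 (x, y)) \<in> carrier K
      \<and> snd (verbal_map K w1 w2 (x, y)) \<in> carrier K"
    by (simp add: verbal_map_def eval_word_closed[OF gK])
  moreover have "\<forall>U\<in>carrier K. \<forall>V\<in>carrier K. \<forall>W\<in>carrier K.
        ybe_S1 (verbal_map K w1 w2) (ybe_S2 (verbal_map K w1 w2) (ybe_S1 (verbal_map K w1 w2) (U, V, W)))
      = ybe_S2 (verbal_map K w1 w2) (ybe_S1 (verbal_map K w1 w2) (ybe_S2 (verbal_map K w1 w2) (U, V, W)))"
  proof (intro ballI)
    fix U V W assume "U \<in> carrier K" "V \<in> carrier K" "W \<in> carrier K"
    then obtain x y z where xyz: "x \<in> carrier G" "y \<in> carrier G" "z \<in> carrier G"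
      and eq: "U = h x" "V = h y" "W = h z" using surj by meson
    have G: "ybe_S1 (verbal_map G w1 w2) (ybe_S2 (verbal_map G w1 w2) (ybe_S1 (verbal_map G w1 w2) (x, y, z)))
      = ybe_S2 (verbal_map G w1 w2) (ybe_S1 (verbal_map G w1 w2) (ybe_S2 (verbal_map G w1 w2) (x, y, z)))"
      by (rule ybeG[rule_format, OF xyz])
    have cl: "\<And>a b w. a \<in> carrier G \<Longrightarrow> b \<in> carrier G \<Longrightarrow> eval_word G a b w \<in> carrier G"
      using E by simp
    have hm: "\<And>a b w. a \<in> carrier G \<Longrightarrow> b \<in> carrier G \<Longrightarrow> eval_word K (h a) (h b) w = h (eval_word G a b w)"
      using E by simp
    show "ybe_S1 (verbal_map K w1 w2) (ybe_S2 (verbal_map K w1 w2) (ybe_S1 (verbal_map K w1 w2) (U, V, W)))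
      = ybe_S2 (verbal_map K w1 w2) (ybe_S1 (verbal_map K w1 w2) (ybe_S2 (verbal_map K w1 w2) (U, V, W)))"
    proof -
      define m3 where "m3 = (\<lambda>(a::'a, b::'a, c::'a). (h a, h b, h c))"
      have "m3 (ybe_S1 (verbal_map G w1 w2) (ybe_S2 (verbal_map G w1 w2) (ybe_S1 (verbal_map G w1 w2) (x, y, z))))
        = m3 (ybe_S2 (verbal_map G w1 w2) (ybe_S1 (verbal_map G w1 w2) (ybe_S2 (verbal_map G w1 w2) (x, y, z))))"
        by (simp only: G)
      then show ?thesis unfolding eq
        by (simp add: m3_def ybe_S1_def ybe_S2_def verbal_map_def hm cl xyz)
    qed
  qed
  ultimately show ?thesis unfolding is_ybe_solution_def K_def by (intro conjI)
qed

end
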